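(* Let $\mathcal X,\mathcal C,d$ be as in the context, $\epsilon\in[0,1]$, $N\ge1$, and let $\mathcal B$ be any set of $M$ vectors $b\in\{-1,1\}^d$ satisfying $\sum_{y\in C}b_{(y,C)}=0$ for all $C\in\mathcal C$ and $\sum_{C\in\mathcal C,\,C\ni x}b_{(x,C)}=0$ for all $x\in\mathcal X$. Let $\mathbb P_0=p_0^N$ and $\mathbb P_1=\frac1M\sum_{b\in\mathcal B}q_{b,\epsilon}^N$. Then $$\chi^2(\mathbb P_1,\mathbb P_0)+1\le\frac1{M^2}\sum_{b,b'\in\mathcal B}\exp\Big(\frac{N\epsilon^2}{d}b^Tb'\Big).$$
   Context: $\mathcal X$ is a finite set of $n$ items, $\mathcal C$ a collection of distinct subsets of $\mathcal X$ of size at least 2, $d=\sum_{C\in\mathcal C}|C|$, and vectors/distributions in dimension $d$ are indexed by pairs $(x,C)$ with $x\in C\in\mathcal C$. $p_0$ is the uniform distribution on these $d$ pairs, and for $b$ as in the claim $q_{b,\epsilon}((x,C))=\frac1d+\frac{\epsilon b_{(x,C)}}d$. For a distribution $\mu$, $\mu^N$ is the law of $N$ i.i.d. samples. For distributions $P,Q$ on a finite set, $\chi^2(P,Q)=\mathbb E_Q[(dP/dQ)^2]-1$. *)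

theory Defs
  imports "HOL-Analysis.Analysis"
begin

definition pairs :: "'a set set \<Rightarrow> ('a \<times> 'a set) set" where
  "pairs CC = {(x, C). C \<in> CC \<and> x \<in> C}"

definition p0 :: "'a set set \<Rightarrow> ('a \<times> 'a set) \<Rightarrow> real" where
  "p0 CC p = (if p \<in> pairs CC then 1 / real (card (pairs CC)) else 0)"

definition qdist :: "'a set set \<Rightarrow> (('a \<times> 'a set) \<Rightarrow> real) \<Rightarrow> real \<Rightarrow> ('a \<times> 'a set) \<Rightarrow> real" where
  "qdist CC b \<epsilon> p = (if p \<in> pairs CC
      then 1 / real (card (pairs CC)) + \<epsilon> * b p / real (card (pairs CC)) else 0)"

definition samples :: "'s set \<Rightarrow> nat \<Rightarrow> (nat \<Rightarrow> 's) set" where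
  "samples S N = PiE {..<N} (\<lambda>_. S)"

definition prodlaw :: "('s \<Rightarrow> real) \<Rightarrow> nat \<Rightarrow> (nat \<Rightarrow> 's) \<Rightarrow> real" where
  "prodlaw \<mu> N s = (\<Prod>i<N. \<mu> (s i))"

definition chi2 :: "'s set \<Rightarrow> ('s \<Rightarrow> real) \<Rightarrow> ('s \<Rightarrow> real) \<Rightarrow> real" where
  "chi2 S P Q = (\<Sum>s\<in>S. Q s * (P s / Q s)^2) - 1"

end

theory Submission
  imports Defs
begin

lemma sum_samples_prod:
  assumes "finite S"
  shows "(\<Sum>s\<in>samples S N. \<Prod>i<N. f (s i)) = (\<Sum>p\<in>S. (f p :: real))^N"
proof -
  have "(\<Prod>i\<in>{..<N}. \<Sum>y\<in>S. f y) = (\<Sum>g\<in>PiE {..<N} (\<lambda>_. S). \<Prod>i\<in>{..<N}. f (g i))"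
    using assms by (intro prod_sum_PiE) auto
  thus ?thesis by (simp add: samples_def)
qed

lemma pairs_finite:
  assumes "finite X" "\<And>C. C \<in> CC \<Longrightarrow> C \<subseteq> X"
  shows "finite (pairs CC)"
proof -
  have "pairs CC \<subseteq> X \<times> Pow X" using assms(2) by (auto simp: pairs_def)
  thus ?thesis using assms(1) finite_subset by blast
qed

lemma sum_pairs:
  assumes "finite X" "\<And>C. C \<in> CC \<Longrightarrow> C \<subseteq> X"
  shows "(\<Sum>p\<in>pairs CC. (f p :: real)) = (\<Sum>C\<in>CC. \<Sum>y\<in>C. f (y, C))"
proof -
  have fCC: "finite CC" using assms by (meson Pow_iff finite_Pow_iff finite_subset subsetI)
  have fC: "\<And>C. C \<in> CC \<Longrightarrow> finite C" using assms finite_subset by blast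
  have eq: "pairs CC = (\<lambda>(C,x). (x,C)) ` (SIGMA C:CC. C)" by (auto simp: pairs_def image_iff)
  have inj: "inj_on (\<lambda>(C,x). (x,C)) (SIGMA C:CC. C)" by (auto simp: inj_on_def)
  have "(\<Sum>p\<in>pairs CC. f p) = (\<Sum>q\<in>(SIGMA C:CC. C). f ((\<lambda>(C,x). (x,C)) q))"
    unfolding eq by (rule sum.reindex[OF inj, unfolded comp_def])
  also have "\<dots> = (\<Sum>C\<in>CC. \<Sum>y\<in>C. f (y, C))"
    using fCC fC by (simp add: sum.Sigma split_beta)
  finally show ?thesis .
qed

theorem lemma5p1:
  fixes X :: "'a set" and CC :: "'a set set" and \<epsilon> :: real and N :: nat
    and B :: "(('a \<times> 'a set) \<Rightarrow> real) set"
  assumes "finite X"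
    and "\<And>C. C \<in> CC \<Longrightarrow> C \<subseteq> X \<and> card C \<ge> 2"
    and "0 \<le> \<epsilon>" and "\<epsilon> \<le> 1" and "N \<ge> 1"
    and "finite B" and "B \<noteq> {}"
    and "B \<subseteq> pairs CC \<rightarrow>\<^sub>E {-1, 1}"
    and "\<And>b C. b \<in> B \<Longrightarrow> C \<in> CC \<Longrightarrow> (\<Sum>y\<in>C. b (y, C)) = 0"
    and "\<And>b x. b \<in> B \<Longrightarrow> x \<in> X \<Longrightarrow> (\<Sum>C\<in>{C\<in>CC. x \<in> C}. b (x, C)) = 0"
  shows "chi2 (samples (pairs CC) N)
            (\<lambda>s. (1 / real (card B)) * (\<Sum>b\<in>B. prodlaw (qdist CC b \<epsilon>) N s))
            (prodlaw (p0 CC) N) + 1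
         \<le> (1 / real (card B)^2) *
            (\<Sum>b\<in>B. \<Sum>b'\<in>B. exp (real N * \<epsilon>^2 / real (card (pairs CC))
                                    * (\<Sum>p\<in>pairs CC. b p * b' p)))"
proof -
  define S where "S = pairs CC"
  define d where "d = real (card S)"
  define M where "M = real (card B)"
  have CX: "\<And>C. C \<in> CC \<Longrightarrow> C \<subseteq> X" using assms(2) by blast
  have fS: "finite S" unfolding S_def using pairs_finite[OF assms(1) CX] .
  have RHSnn: "0 \<le> (1 / real (card B)^2) *
            (\<Sum>b\<in>B. \<Sum>b'\<in>B. exp (real N * \<epsilon>^2 / real (card (pairs CC))
                                    * (\<Sum>p\<in>pairs CC. b p * b' p)))"
    by (intro mult_nonneg_nonneg sum_nonneg) auto
  show ?thesis
  proof (cases "S = {}")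
    case True
    have "samples S N = {}" using True assms(5)
      by (auto simp: samples_def PiE_eq_empty_iff intro: exI[of _ 0])
    thus ?thesis using RHSnn True by (simp add: chi2_def S_def)
  next
    case False
    have dpos: "d > 0" using False fS by (simp add: d_def card_gt_0_iff)
    have bval: "\<And>b p. b \<in> B \<Longrightarrow> p \<in> S \<Longrightarrow> b p = -1 \<or> b p = 1"
      using assms(8) unfolding S_def by (auto simp: PiE_def Pi_def)
    have bsum: "\<And>b. b \<in> B \<Longrightarrow> (\<Sum>p\<in>S. b p) = 0"
      unfolding S_def using sum_pairs[OF assms(1) CX] assms(9) by simp
    define g where "g b b' p = d * qdist CC b \<epsilon> p * qdist CC b' \<epsilon> p" for b b' p
    define ip where "ip b b' = (\<Sum>p\<in>S. b p * b' p)" for b b' :: "('a \<times> 'a set) \<Rightarrow> real"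
    have gsum: "(\<Sum>p\<in>S. g b b' p) = 1 + \<epsilon>^2 / d * ip b b'" if "b \<in> B" "b' \<in> B" for b b'
    proof -
      have "(\<Sum>p\<in>S. g b b' p) = (\<Sum>p\<in>S. (1 + \<epsilon> * b p + \<epsilon> * b' p + \<epsilon>^2 * (b p * b' p)) / d)"
        using dpos by (intro sum.cong) (auto simp: g_def qdist_def S_def d_def field_simps power2_eq_square)
      also have "\<dots> = (d + \<epsilon> * (\<Sum>p\<in>S. b p) + \<epsilon> * (\<Sum>p\<in>S. b' p) + \<epsilon>^2 * ip b b') / d"
        by (simp add: sum_divide_distrib[symmetric] sum.distrib sum_distrib_left ip_def d_def)
      also have "\<dots> = 1 + \<epsilon>^2 / d * ip b b'"
        using bsum that dpos by (simp add: field_simps)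
      finally show ?thesis .
    qed
    have termeq: "prodlaw (p0 CC) N s * ((1 / M * (\<Sum>b\<in>B. prodlaw (qdist CC b \<epsilon>) N s)) / prodlaw (p0 CC) N s)^2
        = 1 / M^2 * (\<Sum>b\<in>B. \<Sum>b'\<in>B. \<Prod>i<N. g b b' (s i))"
      if s: "s \<in> samples S N" for s
    proof -
      have si: "\<And>i. i < N \<Longrightarrow> s i \<in> S" using s by (auto simp: samples_def PiE_def Pi_def)
      have Q: "prodlaw (p0 CC) N s = (1/d)^N"
        unfolding prodlaw_def using si by (simp add: p0_def S_def d_def)
      have Qpos: "(1/d)^N > 0" using dpos by simp
      have "prodlaw (p0 CC) N s * ((1 / M * (\<Sum>b\<in>B. prodlaw (qdist CC b \<epsilon>) N s)) / prodlaw (p0 CC) N s)^2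
          = d^N * (1 / M * (\<Sum>b\<in>B. prodlaw (qdist CC b \<epsilon>) N s))^2"
        unfolding Q using Qpos dpos by (simp add: power2_eq_square field_simps power_divide)
      also have "\<dots> = 1 / M^2 * (\<Sum>b\<in>B. \<Sum>b'\<in>B. d^N * (prodlaw (qdist CC b \<epsilon>) N s * prodlaw (qdist CC b' \<epsilon>) N s))"
        by (simp add: power2_eq_square sum_product sum_distrib_left field_simps)
      also have "\<dots> = 1 / M^2 * (\<Sum>b\<in>B. \<Sum>b'\<in>B. \<Prod>i<N. g b b' (s i))"
        by (simp add: prodlaw_def g_def prod.distrib mult.assoc)
      finally show ?thesis .
    qed
    have "chi2 (samples S N) (\<lambda>s. 1 / M * (\<Sum>b\<in>B. prodlaw (qdist CC b \<epsilon>) N s)) (prodlaw (p0 CC) N) + 1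
        = (\<Sum>s\<in>samples S N. 1 / M^2 * (\<Sum>b\<in>B. \<Sum>b'\<in>B. \<Prod>i<N. g b b' (s i)))"
      unfolding chi2_def using termeq by simp
    also have "\<dots> = 1 / M^2 * (\<Sum>b\<in>B. \<Sum>b'\<in>B. \<Sum>s\<in>samples S N. \<Prod>i<N. g b b' (s i))"
    proof -
      have "(\<Sum>s\<in>samples S N. \<Sum>b\<in>B. \<Sum>b'\<in>B. \<Prod>i<N. g b b' (s i))
          = (\<Sum>b\<in>B. \<Sum>s\<in>samples S N. \<Sum>b'\<in>B. \<Prod>i<N. g b b' (s i))"
        by (rule sum.swap)
      also have "\<dots> = (\<Sum>b\<in>B. \<Sum>b'\<in>B. \<Sum>s\<in>samples S N. \<Prod>i<N. g b b' (s i))"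
        by (intro sum.cong refl sum.swap)
      finally show ?thesis by (simp add: sum_divide_distrib[symmetric])
    qed
    also have "\<dots> = 1 / M^2 * (\<Sum>b\<in>B. \<Sum>b'\<in>B. (1 + \<epsilon>^2 / d * ip b b')^N)"
      using gsum by (simp add: sum_samples_prod[OF fS])
    also have "\<dots> \<le> 1 / M^2 * (\<Sum>b\<in>B. \<Sum>b'\<in>B. exp (real N * \<epsilon>^2 / d * ip b b'))"
    proof (intro mult_left_mono sum_mono)
      fix b b' assume bb: "b \<in> B" "b' \<in> B"
      have "ip b b' \<ge> (\<Sum>p\<in>S. -1)" unfolding ip_def
        using bval[OF bb(1)] bval[OF bb(2)] by (intro sum_mono) fastforce
      hence ipge: "ip b b' \<ge> - d" by (simp add: d_def)
      have e2: "\<epsilon>^2 \<le> 1" using assms(3,4) by (simp add: power_le_one)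
      have "\<epsilon>^2 / d * ip b b' \<ge> \<epsilon>^2 / d * (- d)"
        using ipge dpos by (intro mult_left_mono) auto
      hence nn: "0 \<le> 1 + \<epsilon>^2 / d * ip b b'" using dpos e2 by simp
      have "(1 + \<epsilon>^2 / d * ip b b')^N \<le> (exp (\<epsilon>^2 / d * ip b b'))^N"
        using nn by (intro power_mono) (auto simp: exp_ge_add_one_self)
      also have "\<dots> = exp (real N * \<epsilon>^2 / d * ip b b')"
        by (simp add: exp_of_nat_mult[symmetric] mult.assoc)
      finally show "(1 + \<epsilon>^2 / d * ip b b')^N \<le> exp (real N * \<epsilon>^2 / d * ip b b')" .
    qed simp
    finally show ?thesis by (simp add: S_def d_def M_def ip_def)
  qed
qed

end
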